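(* Assume (A2) and (A4), and let $\beta_1\ge\beta_0\ge0$. Write $\Delta=\sqrt{n(\beta_1-\beta_0)(F_n'(\beta_1)-F_n'(\beta_0))}$. Then almost surely: (a) for every measurable $f:\Sigma_n\to[-1,1]$, $|\langle f(\sigma)\rangle_{\beta_1}-\langle f(\sigma)\rangle_{\beta_0}|\le\Delta$; (b) for every $\sigma\in\Sigma_n$, $\frac1n\big|\sum_i\varphi_{i,n}(\sigma)\langle\varphi_{i,n}\rangle_{\beta_1}-\sum_i\varphi_{i,n}(\sigma)\langle\varphi_{i,n}\rangle_{\beta_0}\big|\le\Delta$; (c) $\frac1n\big|\sum_i\langle\varphi_{i,n}\rangle_{\beta_1}^2-\sum_i\langle\varphi_{i,n}\rangle_{\beta_0}^2\big|\le2\Delta$.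
   Context: Setting: $(\Sigma_n,P_n)$ is a Polish space with a Borel probability measure; $H_n$ is a centered Gaussian field on $\Sigma_n$; $Z_n(\beta)=\int e^{\beta H_n}dP_n$, $F_n(\beta)=\frac1n\log Z_n(\beta)$, and $\langle\cdot\rangle_\beta$ is expectation under $\mu_n^\beta(d\sigma)=e^{\beta H_n(\sigma)}P_n(d\sigma)/Z_n(\beta)$. (A2): $\operatorname{Var}H_n(\sigma)=n$ for all $\sigma$. (A4): there are measurable $\varphi_{i,n}:\Sigma_n\to\mathbb R$ and i.i.d. standard normal $g_{i,n}$ ($i\ge1$) with $H_n(\sigma)=\sum_{i\ge1}g_{i,n}\varphi_{i,n}(\sigma)$ a.s. for each $\sigma$, the series converging in $L^2(\mathbb P)$. *)

theory Defs
  imports "HOL-Probability.Probability"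
begin

text \<open>Partition function Z_n(beta) = integral of exp(beta H) over P, for a fixed
  realisation h : Sigma -> real of the Hamiltonian.\<close>
definition partition_fn :: "'s measure \<Rightarrow> ('s \<Rightarrow> real) \<Rightarrow> real \<Rightarrow> real" where
  "partition_fn P h \<beta> = (\<integral>\<sigma>. exp (\<beta> * h \<sigma>) \<partial>P)"

definition free_energy :: "nat \<Rightarrow> 's measure \<Rightarrow> ('s \<Rightarrow> real) \<Rightarrow> real \<Rightarrow> real" where
  "free_energy n P h \<beta> = ln (partition_fn P h \<beta>) / real n"

definition gibbs_avg :: "'s measure \<Rightarrow> ('s \<Rightarrow> real) \<Rightarrow> real \<Rightarrow> ('s \<Rightarrow> real) \<Rightarrow> real" where
  "gibbs_avg P h \<beta> f = (\<integral>\<sigma>. f \<sigma> * exp (\<beta> * h \<sigma>) \<partial>P) / partition_fn P h \<beta>"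

end

theory Submission
  imports Defs
begin


lemma ln_ge_ratio:
  fixes x :: real assumes "1 \<le> x"
  shows "2 * (x - 1) / (x + 1) \<le> ln x"
proof -
  let ?f = "\<lambda>x::real. ln x - 2 * (x - 1) / (x + 1)"
  have "?f 1 \<le> ?f x"
  proof (rule DERIV_nonneg_imp_nondecreasing[OF assms])
    fix y :: real assume y: "1 \<le> y" "y \<le> x"
    have d: "DERIV ?f y :> (1 / y - 4 / (y + 1)^2)"
      using y by (auto intro!: derivative_eq_intros simp: field_simps power2_eq_square)
    have "1 / y - 4 / (y + 1)^2 = (y - 1)^2 / (y * (y+1)^2)"
    proof -
      have "y \<noteq> 0" "y + 1 \<noteq> 0" using y by auto
      thus ?thesis by (simp add: divide_simps power2_eq_square) algebra
    qed
    also have "\<dots> \<ge> 0" using y by simp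
    finally show "\<exists>d. DERIV ?f y :> d \<and> 0 \<le> d" using d by blast
  qed
  then show ?thesis by simp
qed

lemma sq_le_logmean:
  fixes a b :: real assumes "0 < a" "0 < b"
  shows "(a - b)^2 \<le> (a - b) * (ln a - ln b) * ((a + b) / 2)"
proof -
  have key: "(a - b)^2 \<le> (a - b) * (ln a - ln b) * ((a + b) / 2)"
    if ab: "0 < b" "b \<le> a" for a b :: real
  proof -
    define x where "x = a / b"
    have x1: "1 \<le> x" using ab by (simp add: x_def)
    have a: "a = b * x" using ab by (simp add: x_def)
    have l: "ln a - ln b = ln x" using ab by (simp add: a ln_mult)
    have "2 * (x - 1) / (x + 1) \<le> ln x" by (rule ln_ge_ratio[OF x1])
    hence "2 * (x - 1) \<le> ln x * (x + 1)" using x1 by (simp add: field_simps)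
    hence "(x - 1) * (2 * (x - 1)) \<le> (x - 1) * (ln x * (x + 1))"
      using x1 by (simp add: mult_left_mono)
    hence I: "b^2 * ((x - 1) * (2 * (x - 1))) \<le> b^2 * ((x - 1) * (ln x * (x + 1)))"
      by (rule mult_left_mono) simp
    have E1: "(a - b)^2 = b^2 * ((x - 1) * (2 * (x - 1))) / 2" unfolding a by (simp add: power2_eq_square algebra_simps)
    have E2: "(a - b) * (ln a - ln b) * ((a + b) / 2) = b^2 * ((x - 1) * (ln x * (x + 1))) / 2"
      unfolding l by (simp only: a, simp add: power2_eq_square divide_simps, algebra)
    show ?thesis unfolding E1 E2 using I by (simp add: divide_right_mono)
  qed
  show ?thesis
  proof (cases "b \<le> a")
    case True thus ?thesis using key assms by blast
  next
    case False
    have "(b - a)^2 \<le> (b - a) * (ln b - ln a) * ((b + a) / 2)" using key[of a b] False assms by simp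
    thus ?thesis by (simp add: power2_eq_square algebra_simps)
  qed
qed

lemma abs_le_amgm:
  fixes x D A t :: real
  assumes "x^2 \<le> D * A" "0 \<le> D" "0 \<le> A" "0 < t"
  shows "\<bar>x\<bar> \<le> (t * D + A / t) / 2"
proof -
  have "0 \<le> (t * D - A / t)^2" by simp
  hence "4 * (D * A) \<le> (t * D + A / t)^2" using assms(4)
    by (simp add: power2_eq_square field_simps)
  hence "(2 * \<bar>x\<bar>)^2 \<le> (t * D + A / t)^2" using assms(1) by (simp add: power2_eq_square)
  moreover have "0 \<le> t * D + A / t" using assms by simp
  ultimately have "2 * \<bar>x\<bar> \<le> t * D + A / t" using power2_le_imp_le by blast
  thus ?thesis by simp
qed

lemma exp_taylor2:
  fixes x :: real
  shows "\<bar>exp x - 1 - x\<bar> \<le> x^2 * exp \<bar>x\<bar>"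
proof -
  obtain t where t: "\<bar>t\<bar> \<le> \<bar>x\<bar>" "exp x = (\<Sum>m<2. (x ^ m) / fact m) + (exp t / fact 2) * x ^ 2"
    using Maclaurin_exp_le[of x 2] by blast
  have "exp x - 1 - x = exp t / 2 * x^2" using t(2) by (simp add: numeral_2_eq_2)
  moreover have "exp t \<le> exp \<bar>x\<bar>" using t(1) by simp
  ultimately have "exp t * x^2 \<le> x^2 * exp \<bar>x\<bar>"
    using mult_right_mono[of "exp t" "exp \<bar>x\<bar>" "x^2"] by (simp add: mult.commute)
  moreover have "0 \<le> x^2 * exp \<bar>x\<bar>" by simp
  ultimately have "exp t / 2 * x^2 \<le> x^2 * exp \<bar>x\<bar>" by linarith
  moreover have "exp t / 2 * x^2 \<ge> 0" by simp
  ultimately show ?thesis using \<open>exp x - 1 - x = exp t / 2 * x^2\<close> by (simp only: abs_of_nonneg)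
qed

lemma sq_le_exp_abs: fixes x :: real shows "x^2 \<le> 4 * exp \<bar>x\<bar>"
proof -
  have "1 + \<bar>x\<bar>/2 \<le> exp (\<bar>x\<bar>/2)" by (rule exp_ge_add_one_self)
  hence "\<bar>x\<bar>/2 \<le> exp (\<bar>x\<bar>/2)" by linarith
  hence "(\<bar>x\<bar>/2)^2 \<le> (exp (\<bar>x\<bar>/2))^2" by (intro power_mono) auto
  also have "(exp (\<bar>x\<bar>/2))^2 = exp \<bar>x\<bar>" by (simp add: power2_eq_square exp_add[symmetric])
  finally show ?thesis by (simp add: power2_eq_square)
qed

lemma abs_le_exp_abs: fixes x :: real shows "\<bar>x\<bar> \<le> exp \<bar>x\<bar>"
  using exp_ge_add_one_self[of "\<bar>x\<bar>"] by linarith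

lemma exp_abs_le: fixes x :: real shows "exp \<bar>x\<bar> \<le> exp x + exp (-x)"
  by (cases "x \<ge> 0") (auto simp: add_increasing add_increasing2)

lemma exp_int_all:
  fixes h :: "'s \<Rightarrow> real"
  assumes hm[measurable]: "h \<in> borel_measurable P"
    and ints: "\<And>k::int. integrable P (\<lambda>\<sigma>. exp (real_of_int k * h \<sigma>))"
  shows "integrable P (\<lambda>\<sigma>. exp (\<beta> * h \<sigma>))"
proof -
  have "integrable P (\<lambda>\<sigma>. exp (of_int \<lfloor>\<beta>\<rfloor> * h \<sigma>) + exp (of_int \<lceil>\<beta>\<rceil> * h \<sigma>))"
    using ints by auto
  then show ?thesis
  proof (rule Bochner_Integration.integrable_bound)
    show "(\<lambda>\<sigma>. exp (\<beta> * h \<sigma>)) \<in> borel_measurable P" by measurable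
    show "AE \<sigma> in P. norm (exp (\<beta>*h \<sigma>)) \<le> norm (exp (of_int \<lfloor>\<beta>\<rfloor> * h \<sigma>) + exp (of_int \<lceil>\<beta>\<rceil> * h \<sigma>))"
    proof (rule AE_I2)
      fix \<sigma>
      have "\<beta>*h \<sigma> \<le> of_int \<lfloor>\<beta>\<rfloor> * h \<sigma> \<or> \<beta>*h \<sigma> \<le> of_int \<lceil>\<beta>\<rceil> * h \<sigma>"
      proof (cases "h \<sigma> \<ge> 0")
        case True
        then show ?thesis by (intro disjI2 mult_right_mono) auto
      next
        case False
        then show ?thesis by (intro disjI1 mult_right_mono_neg) auto
      qed
      then have "exp (\<beta>*h \<sigma>) \<le> exp (of_int \<lfloor>\<beta>\<rfloor> * h \<sigma>) + exp (of_int \<lceil>\<beta>\<rceil> * h \<sigma>)"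
        by (auto intro: add_increasing add_increasing2)
      then show "norm (exp (\<beta>*h \<sigma>)) \<le> norm (exp (of_int \<lfloor>\<beta>\<rfloor> * h \<sigma>) + exp (of_int \<lceil>\<beta>\<rceil> * h \<sigma>))"
        by simp
    qed
  qed
qed

lemma int_weight1:
  fixes h :: "'s \<Rightarrow> real"
  assumes hm[measurable]: "h \<in> borel_measurable P"
    and E: "\<And>b. integrable P (\<lambda>\<sigma>. exp (b * h \<sigma>))"
  shows "integrable P (\<lambda>\<sigma>. h \<sigma> * exp (\<beta> * h \<sigma>))"
proof -
  have "integrable P (\<lambda>\<sigma>. exp ((\<beta>+1) * h \<sigma>) + exp ((\<beta>-1) * h \<sigma>))" using E by auto
  then show ?thesis
  proof (rule Bochner_Integration.integrable_bound)
    show "(\<lambda>\<sigma>. h \<sigma> * exp (\<beta> * h \<sigma>)) \<in> borel_measurable P" by measurable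
    show "AE \<sigma> in P. norm (h \<sigma> * exp (\<beta> * h \<sigma>)) \<le> norm (exp ((\<beta>+1) * h \<sigma>) + exp ((\<beta>-1) * h \<sigma>))"
    proof (rule AE_I2)
      fix \<sigma>
      have "\<bar>h \<sigma>\<bar> \<le> exp (h \<sigma>) + exp (- h \<sigma>)" using abs_le_exp_abs[of "h \<sigma>"] exp_abs_le[of "h \<sigma>"] by linarith
      hence "\<bar>h \<sigma>\<bar> * exp (\<beta> * h \<sigma>) \<le> (exp (h \<sigma>) + exp (- h \<sigma>)) * exp (\<beta> * h \<sigma>)"
        by (rule mult_right_mono) simp
      also have "\<dots> = exp ((\<beta>+1) * h \<sigma>) + exp ((\<beta>-1) * h \<sigma>)"
        by (simp add: exp_add[symmetric] algebra_simps)
      finally show "norm (h \<sigma> * exp (\<beta> * h \<sigma>)) \<le> norm (exp ((\<beta>+1) * h \<sigma>) + exp ((\<beta>-1) * h \<sigma>))"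
        by (simp add: abs_mult)
    qed
  qed
qed

lemma int_weight2:
  fixes h :: "'s \<Rightarrow> real"
  assumes hm[measurable]: "h \<in> borel_measurable P"
    and E: "\<And>b. integrable P (\<lambda>\<sigma>. exp (b * h \<sigma>))"
  shows "integrable P (\<lambda>\<sigma>. (h \<sigma>)^2 * exp \<bar>h \<sigma>\<bar> * exp (\<beta> * h \<sigma>))"
proof -
  have "integrable P (\<lambda>\<sigma>. 4 * (exp ((\<beta>+2) * h \<sigma>) + exp ((\<beta>-2) * h \<sigma>)))" using E by auto
  then show ?thesis
  proof (rule Bochner_Integration.integrable_bound)
    show "(\<lambda>\<sigma>. (h \<sigma>)^2 * exp \<bar>h \<sigma>\<bar> * exp (\<beta> * h \<sigma>)) \<in> borel_measurable P" by measurable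
    show "AE \<sigma> in P. norm ((h \<sigma>)^2 * exp \<bar>h \<sigma>\<bar> * exp (\<beta> * h \<sigma>)) \<le> norm (4 * (exp ((\<beta>+2) * h \<sigma>) + exp ((\<beta>-2) * h \<sigma>)))"
    proof (rule AE_I2)
      fix \<sigma>
      have "(h \<sigma>)^2 * exp \<bar>h \<sigma>\<bar> \<le> (4 * exp \<bar>h \<sigma>\<bar>) * exp \<bar>h \<sigma>\<bar>"
        by (rule mult_right_mono[OF sq_le_exp_abs]) simp
      also have "\<dots> = 4 * exp \<bar>2 * h \<sigma>\<bar>" by (simp add: exp_add[symmetric] abs_mult)
      also have "\<dots> \<le> 4 * (exp (2 * h \<sigma>) + exp (- (2 * h \<sigma>)))" using exp_abs_le[of "2 * h \<sigma>"] by simp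
      finally have "(h \<sigma>)^2 * exp \<bar>h \<sigma>\<bar> * exp (\<beta> * h \<sigma>) \<le> 4 * (exp (2 * h \<sigma>) + exp (- (2 * h \<sigma>))) * exp (\<beta> * h \<sigma>)"
        by (rule mult_right_mono) simp
      also have "\<dots> = 4 * (exp ((\<beta>+2) * h \<sigma>) + exp ((\<beta>-2) * h \<sigma>))"
        by (simp add: exp_add[symmetric] algebra_simps)
      finally show "norm ((h \<sigma>)^2 * exp \<bar>h \<sigma>\<bar> * exp (\<beta> * h \<sigma>)) \<le> norm (4 * (exp ((\<beta>+2) * h \<sigma>) + exp ((\<beta>-2) * h \<sigma>)))"
        by simp
    qed
  qed
qed

lemma int_weight_bdd:
  fixes h :: "'s \<Rightarrow> real"
  assumes hm[measurable]: "h \<in> borel_measurable P" and fm[measurable]: "f \<in> borel_measurable P"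
    and E: "integrable P (\<lambda>\<sigma>. exp (\<beta> * h \<sigma>))" and B: "\<And>\<sigma>. \<bar>f \<sigma>\<bar> \<le> B"
  shows "integrable P (\<lambda>\<sigma>. f \<sigma> * exp (\<beta> * h \<sigma>))"
proof -
  have "integrable P (\<lambda>\<sigma>. B * exp (\<beta> * h \<sigma>))" using E by auto
  then show ?thesis
  proof (rule Bochner_Integration.integrable_bound)
    show "(\<lambda>\<sigma>. f \<sigma> * exp (\<beta> * h \<sigma>)) \<in> borel_measurable P" by measurable
    show "AE \<sigma> in P. norm (f \<sigma> * exp (\<beta> * h \<sigma>)) \<le> norm (B * exp (\<beta> * h \<sigma>))"
      using B by (intro AE_I2) (auto simp: abs_mult intro!: mult_right_mono order.trans[OF B abs_ge_self])
  qed
qed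

lemma Z_pos:
  fixes h :: "'s \<Rightarrow> real"
  assumes "prob_space P" and hm[measurable]: "h \<in> borel_measurable P"
    and E: "integrable P (\<lambda>\<sigma>. exp (\<beta> * h \<sigma>))"
  shows "partition_fn P h \<beta> > 0"
proof -
  interpret prob_space P by fact
  have "0 \<le> partition_fn P h \<beta>" unfolding partition_fn_def by simp
  moreover have "partition_fn P h \<beta> \<noteq> 0"
  proof
    assume "partition_fn P h \<beta> = 0"
    then have "AE \<sigma> in P. exp (\<beta> * h \<sigma>) = 0"
      unfolding partition_fn_def using integral_nonneg_eq_0_iff_AE[OF E] by simp
    then have "AE \<sigma> in P. False" by simp
    then show False by simp
  qed
  ultimately show ?thesis by simp
qed



lemma Z_deriv:
  fixes h :: "'s \<Rightarrow> real"
  assumes hm[measurable]: "h \<in> borel_measurable P"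
    and E: "\<And>b. integrable P (\<lambda>\<sigma>. exp (b * h \<sigma>))"
  shows "((partition_fn P h) has_field_derivative (\<integral>\<sigma>. h \<sigma> * exp (\<beta> * h \<sigma>) \<partial>P)) (at \<beta>)"
proof -
  define Z' where "Z' = (\<integral>\<sigma>. h \<sigma> * exp (\<beta> * h \<sigma>) \<partial>P)"
  define K where "K = (\<integral>\<sigma>. (h \<sigma>)^2 * exp \<bar>h \<sigma>\<bar> * exp (\<beta> * h \<sigma>) \<partial>P)"
  have I1: "integrable P (\<lambda>\<sigma>. h \<sigma> * exp (\<beta> * h \<sigma>))" by (rule int_weight1[OF hm E])
  have I2: "integrable P (\<lambda>\<sigma>. (h \<sigma>)^2 * exp \<bar>h \<sigma>\<bar> * exp (\<beta> * h \<sigma>))" by (rule int_weight2[OF hm E])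
  have key: "\<bar>(partition_fn P h y - partition_fn P h \<beta>)/(y - \<beta>) - Z'\<bar> \<le> K * \<bar>y - \<beta>\<bar>"
    if y: "y \<noteq> \<beta>" "\<bar>y - \<beta>\<bar> \<le> 1" for y
  proof -
    define t where "t = y - \<beta>"
    have t0: "t \<noteq> 0" "\<bar>t\<bar> \<le> 1" using y by (auto simp: t_def)
    have Ig: "integrable P (\<lambda>\<sigma>. (exp (y * h \<sigma>) - exp (\<beta> * h \<sigma>)) / t - h \<sigma> * exp (\<beta> * h \<sigma>))"
      using E I1 by auto
    have "(partition_fn P h y - partition_fn P h \<beta>)/(y - \<beta>) - Z'
        = (\<integral>\<sigma>. (exp (y * h \<sigma>) - exp (\<beta> * h \<sigma>)) / t - h \<sigma> * exp (\<beta> * h \<sigma>) \<partial>P)"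
      unfolding partition_fn_def Z'_def t_def
      using E I1 by (simp add: integral_diff)
    also have "\<dots> = (\<integral>\<sigma>. exp (\<beta> * h \<sigma>) * ((exp (t * h \<sigma>) - 1 - t * h \<sigma>) / t) \<partial>P)"
    proof (rule Bochner_Integration.integral_cong[OF refl])
      fix \<sigma>
      have "exp (y * h \<sigma>) = exp (\<beta> * h \<sigma>) * exp (t * h \<sigma>)"
        by (simp add: t_def exp_add[symmetric] algebra_simps)
      then show "(exp (y * h \<sigma>) - exp (\<beta> * h \<sigma>)) / t - h \<sigma> * exp (\<beta> * h \<sigma>)
          = exp (\<beta> * h \<sigma>) * ((exp (t * h \<sigma>) - 1 - t * h \<sigma>) / t)"
        using t0 by (simp add: field_simps)
    qed
    finally have eq: "(partition_fn P h y - partition_fn P h \<beta>)/(y - \<beta>) - Z'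
        = (\<integral>\<sigma>. exp (\<beta> * h \<sigma>) * ((exp (t * h \<sigma>) - 1 - t * h \<sigma>) / t) \<partial>P)" .
    have Ig2: "integrable P (\<lambda>\<sigma>. exp (\<beta> * h \<sigma>) * ((exp (t * h \<sigma>) - 1 - t * h \<sigma>) / t))"
    proof -
      have "integrable P (\<lambda>\<sigma>. (exp (y * h \<sigma>) - exp (\<beta> * h \<sigma>)) / t - h \<sigma> * exp (\<beta> * h \<sigma>))" by (rule Ig)
      moreover have "\<And>\<sigma>. (exp (y * h \<sigma>) - exp (\<beta> * h \<sigma>)) / t - h \<sigma> * exp (\<beta> * h \<sigma>)
          = exp (\<beta> * h \<sigma>) * ((exp (t * h \<sigma>) - 1 - t * h \<sigma>) / t)"
      proof -
        fix \<sigma>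
        have "exp (y * h \<sigma>) = exp (\<beta> * h \<sigma>) * exp (t * h \<sigma>)"
          by (simp add: t_def exp_add[symmetric] algebra_simps)
        then show "(exp (y * h \<sigma>) - exp (\<beta> * h \<sigma>)) / t - h \<sigma> * exp (\<beta> * h \<sigma>)
          = exp (\<beta> * h \<sigma>) * ((exp (t * h \<sigma>) - 1 - t * h \<sigma>) / t)"
          using t0 by (simp add: field_simps)
      qed
      ultimately show ?thesis by simp
    qed
    have "\<bar>(\<integral>\<sigma>. exp (\<beta> * h \<sigma>) * ((exp (t * h \<sigma>) - 1 - t * h \<sigma>) / t) \<partial>P)\<bar>
        \<le> (\<integral>\<sigma>. \<bar>exp (\<beta> * h \<sigma>) * ((exp (t * h \<sigma>) - 1 - t * h \<sigma>) / t)\<bar> \<partial>P)"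
      by (rule integral_abs_bound)
    also have "\<dots> \<le> (\<integral>\<sigma>. \<bar>t\<bar> * ((h \<sigma>)^2 * exp \<bar>h \<sigma>\<bar> * exp (\<beta> * h \<sigma>)) \<partial>P)"
    proof (rule integral_mono)
      show "integrable P (\<lambda>\<sigma>. \<bar>exp (\<beta> * h \<sigma>) * ((exp (t * h \<sigma>) - 1 - t * h \<sigma>) / t)\<bar>)"
        using Ig2 by (rule integrable_abs)
      show "integrable P (\<lambda>\<sigma>. \<bar>t\<bar> * ((h \<sigma>)^2 * exp \<bar>h \<sigma>\<bar> * exp (\<beta> * h \<sigma>)))"
        using I2 by simp
      fix \<sigma> assume "\<sigma> \<in> space P"
      have a: "\<bar>exp (t * h \<sigma>) - 1 - t * h \<sigma>\<bar> \<le> (t * h \<sigma>)^2 * exp \<bar>t * h \<sigma>\<bar>"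
        by (rule exp_taylor2)
      have "exp \<bar>t * h \<sigma>\<bar> \<le> exp \<bar>h \<sigma>\<bar>"
        using t0 by (simp add: abs_mult mult_left_le_one_le)
      then have "(t * h \<sigma>)^2 * exp \<bar>t * h \<sigma>\<bar> \<le> (t * h \<sigma>)^2 * exp \<bar>h \<sigma>\<bar>"
        by (rule mult_left_mono) simp
      with a have b: "\<bar>exp (t * h \<sigma>) - 1 - t * h \<sigma>\<bar> \<le> t^2 * ((h \<sigma>)^2 * exp \<bar>h \<sigma>\<bar>)"
        by (simp add: power_mult_distrib)
      have "\<bar>exp (\<beta> * h \<sigma>) * ((exp (t * h \<sigma>) - 1 - t * h \<sigma>) / t)\<bar>
          = exp (\<beta> * h \<sigma>) * (\<bar>exp (t * h \<sigma>) - 1 - t * h \<sigma>\<bar> / \<bar>t\<bar>)"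
        by (simp add: abs_mult)
      also have "\<dots> \<le> exp (\<beta> * h \<sigma>) * (t^2 * ((h \<sigma>)^2 * exp \<bar>h \<sigma>\<bar>) / \<bar>t\<bar>)"
        using b t0 by (intro mult_left_mono divide_right_mono) auto
      also have "\<dots> = \<bar>t\<bar> * ((h \<sigma>)^2 * exp \<bar>h \<sigma>\<bar> * exp (\<beta> * h \<sigma>))"
        using t0 by (simp add: power2_eq_square field_simps)
      finally show "\<bar>exp (\<beta> * h \<sigma>) * ((exp (t * h \<sigma>) - 1 - t * h \<sigma>) / t)\<bar>
          \<le> \<bar>t\<bar> * ((h \<sigma>)^2 * exp \<bar>h \<sigma>\<bar> * exp (\<beta> * h \<sigma>))" .
    qed
    also have "\<dots> = K * \<bar>y - \<beta>\<bar>" by (simp add: K_def t_def)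
    finally show ?thesis using eq by simp
  qed
  have "((\<lambda>y. (partition_fn P h y - partition_fn P h \<beta>)/(y - \<beta>) - Z') \<longlongrightarrow> 0) (at \<beta>)"
  proof (rule Lim_null_comparison)
    show "\<forall>\<^sub>F y in at \<beta>. norm ((partition_fn P h y - partition_fn P h \<beta>)/(y - \<beta>) - Z') \<le> K * \<bar>y - \<beta>\<bar>"
      unfolding eventually_at
      by (rule exI[of _ 1]) (auto intro!: key simp: dist_real_def)
    have "((\<lambda>y. K * \<bar>y - \<beta>\<bar>) \<longlongrightarrow> K * \<bar>\<beta> - \<beta>\<bar>) (at \<beta>)"
      by (intro tendsto_intros)
    then show "((\<lambda>y. K * \<bar>y - \<beta>\<bar>) \<longlongrightarrow> 0) (at \<beta>)" by simp
  qed
  then have "((\<lambda>y. (partition_fn P h y - partition_fn P h \<beta>)/(y - \<beta>)) \<longlongrightarrow> Z') (at \<beta>)"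
    by (rule LIM_zero_cancel)
  then show ?thesis unfolding Z'_def has_field_derivative_iff .
qed



lemma L1_bound:
  fixes h :: "'s \<Rightarrow> real"
  assumes P: "prob_space P" and hm[measurable]: "h \<in> borel_measurable P"
    and E: "\<And>b. integrable P (\<lambda>\<sigma>. exp (b * h \<sigma>))"
  shows "(\<integral>\<sigma>. \<bar>exp (b1 * h \<sigma>) / partition_fn P h b1 - exp (b0 * h \<sigma>) / partition_fn P h b0\<bar> \<partial>P)
     \<le> sqrt ((b1 - b0) * ((\<integral>\<sigma>. h \<sigma> * exp (b1 * h \<sigma>) \<partial>P) / partition_fn P h b1
                         - (\<integral>\<sigma>. h \<sigma> * exp (b0 * h \<sigma>) \<partial>P) / partition_fn P h b0))"
proof -
  interpret prob_space P by fact
  define Z1 where "Z1 = partition_fn P h b1"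
  define Z0 where "Z0 = partition_fn P h b0"
  have Z1p: "Z1 > 0" unfolding Z1_def by (rule Z_pos[OF P hm E])
  have Z0p: "Z0 > 0" unfolding Z0_def by (rule Z_pos[OF P hm E])
  define p1 where "p1 = (\<lambda>\<sigma>. exp (b1 * h \<sigma>) / Z1)"
  define p0 where "p0 = (\<lambda>\<sigma>. exp (b0 * h \<sigma>) / Z0)"
  define c where "c = ln Z1 - ln Z0"
  define D where "D = (\<lambda>\<sigma>. (p1 \<sigma> - p0 \<sigma>) * ((b1 - b0) * h \<sigma> - c))"
  define A where "A = (\<lambda>\<sigma>. (p1 \<sigma> + p0 \<sigma>) / 2)"
  have p1pos: "\<And>\<sigma>. p1 \<sigma> > 0" unfolding p1_def using Z1p by simp
  have p0pos: "\<And>\<sigma>. p0 \<sigma> > 0" unfolding p0_def using Z0p by simp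
  have lnp: "ln (p1 \<sigma>) - ln (p0 \<sigma>) = (b1 - b0) * h \<sigma> - c" for \<sigma>
    unfolding p1_def p0_def c_def using Z1p Z0p by (simp add: ln_div algebra_simps)
  have ip1: "integrable P p1" unfolding p1_def using E by simp
  have ip0: "integrable P p0" unfolding p0_def using E by simp
  have s1: "integral\<^sup>L P p1 = 1" unfolding p1_def Z1_def partition_fn_def using Z1p
    by (simp add: Z1_def partition_fn_def)
  have s0: "integral\<^sup>L P p0 = 1" unfolding p0_def Z0_def partition_fn_def using Z0p
    by (simp add: Z0_def partition_fn_def)
  have ih1: "integrable P (\<lambda>\<sigma>. h \<sigma> * p1 \<sigma>)" unfolding p1_def using int_weight1[OF hm E, of b1] by simp
  have ih0: "integrable P (\<lambda>\<sigma>. h \<sigma> * p0 \<sigma>)" unfolding p0_def using int_weight1[OF hm E, of b0] by simp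
  have iD: "integrable P D"
    unfolding D_def using ip1 ip0 ih1 ih0 by (simp add: algebra_simps)
  have iA: "integrable P A" unfolding A_def using ip1 ip0 by simp
  have sA: "integral\<^sup>L P A = 1" unfolding A_def using ip1 ip0 s1 s0 by simp
  have intD: "integral\<^sup>L P D = (b1 - b0) * ((\<integral>\<sigma>. h \<sigma> * exp (b1 * h \<sigma>) \<partial>P) / Z1
                         - (\<integral>\<sigma>. h \<sigma> * exp (b0 * h \<sigma>) \<partial>P) / Z0)"
  proof -
    have "D = (\<lambda>\<sigma>. (b1 - b0) * (h \<sigma> * p1 \<sigma>) - (b1 - b0) * (h \<sigma> * p0 \<sigma>) - (c * p1 \<sigma> - c * p0 \<sigma>))"
      unfolding D_def by (auto simp: algebra_simps)
    then have "integral\<^sup>L P D = (b1 - b0) * (\<integral>\<sigma>. h \<sigma> * p1 \<sigma> \<partial>P) - (b1 - b0) * (\<integral>\<sigma>. h \<sigma> * p0 \<sigma> \<partial>P)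
       - (c * integral\<^sup>L P p1 - c * integral\<^sup>L P p0)"
      using ip1 ip0 ih1 ih0 by simp
    also have "\<dots> = (b1 - b0) * ((\<integral>\<sigma>. h \<sigma> * p1 \<sigma> \<partial>P) - (\<integral>\<sigma>. h \<sigma> * p0 \<sigma> \<partial>P))"
      using s1 s0 by (simp add: algebra_simps)
    also have "(\<integral>\<sigma>. h \<sigma> * p1 \<sigma> \<partial>P) = (\<integral>\<sigma>. h \<sigma> * exp (b1 * h \<sigma>) \<partial>P) / Z1"
      unfolding p1_def times_divide_eq_right by (rule integral_divide_zero)
    also have "(\<integral>\<sigma>. h \<sigma> * p0 \<sigma> \<partial>P) = (\<integral>\<sigma>. h \<sigma> * exp (b0 * h \<sigma>) \<partial>P) / Z0"
      unfolding p0_def times_divide_eq_right by (rule integral_divide_zero)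
    finally show ?thesis .
  qed
  have pw: "\<bar>p1 \<sigma> - p0 \<sigma>\<bar> \<le> (t * D \<sigma> + A \<sigma> / t) / 2" if t: "t > 0" for t \<sigma>
  proof -
    have sq: "(p1 \<sigma> - p0 \<sigma>)^2 \<le> D \<sigma> * A \<sigma>"
      using sq_le_logmean[OF p1pos p0pos, of \<sigma> \<sigma>] unfolding D_def A_def lnp[symmetric] by simp
    have Ap: "A \<sigma> > 0" unfolding A_def using p1pos[of \<sigma>] p0pos[of \<sigma>] by simp
    have "0 \<le> D \<sigma> * A \<sigma>" using sq by (metis order_trans zero_le_power2)
    then have Dn: "0 \<le> D \<sigma>" using Ap by (simp add: zero_le_mult_iff)
    show ?thesis by (rule abs_le_amgm[OF sq Dn less_imp_le[OF Ap] t])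
  qed
  define I where "I = (\<integral>\<sigma>. \<bar>p1 \<sigma> - p0 \<sigma>\<bar> \<partial>P)"
  define V where "V = integral\<^sup>L P D"
  have Dn: "0 \<le> D \<sigma>" for \<sigma>
  proof -
    have sq: "(p1 \<sigma> - p0 \<sigma>)^2 \<le> D \<sigma> * A \<sigma>"
      using sq_le_logmean[OF p1pos p0pos, of \<sigma> \<sigma>] unfolding D_def A_def lnp[symmetric] by simp
    have Ap: "A \<sigma> > 0" unfolding A_def using p1pos[of \<sigma>] p0pos[of \<sigma>] by simp
    have "0 \<le> D \<sigma> * A \<sigma>" using sq by (metis order_trans zero_le_power2)
    then show ?thesis using Ap by (simp add: zero_le_mult_iff)
  qed
  have V0: "0 \<le> V" unfolding V_def using Dn by simp
  have It: "I \<le> (t * V + 1 / t) / 2" if t: "t > 0" for t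
  proof -
    have "I \<le> (\<integral>\<sigma>. (t * D \<sigma> + A \<sigma> / t) / 2 \<partial>P)"
      unfolding I_def
      by (rule integral_mono) (use ip1 ip0 iD iA pw t in auto)
    also have "\<dots> = (t * V + 1 / t) / 2" using iD iA sA by (simp add: V_def)
    finally show ?thesis .
  qed
  have "I \<le> sqrt V"
  proof (cases "V > 0")
    case True
    have "I \<le> (1 / sqrt V * V + 1 / (1 / sqrt V)) / 2" by (rule It) (use True in simp)
    also have "\<dots> = sqrt V" using True by (simp add: field_simps real_sqrt_mult[symmetric])
    finally show ?thesis .
  next
    case False
    then have V: "V = 0" using V0 by simp
    show ?thesis
    proof (rule ccontr)
      assume "\<not> I \<le> sqrt V"
      then have Ip: "I > 0" using V by simp
      have "I \<le> (1 / I * V + 1 / (1 / I)) / 2" by (rule It) (use Ip in simp)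
      then show False using V Ip by simp
    qed
  qed
  then show ?thesis unfolding I_def V_def intD p1_def p0_def Z1_def Z0_def .
qed



lemma abs_suminf_le:
  fixes f :: "nat \<Rightarrow> real"
  assumes "summable f" "\<And>N. \<bar>\<Sum>i<N. f i\<bar> \<le> B"
  shows "\<bar>suminf f\<bar> \<le> B"
proof -
  have "suminf f \<le> B" using assms by (intro suminf_le_const) (auto simp: abs_le_iff)
  moreover have "suminf (\<lambda>i. - f i) \<le> B" using assms
    by (intro suminf_le_const summable_minus) (auto simp: abs_le_iff sum_negf)
  ultimately show ?thesis using suminf_minus[OF assms(1)] by (simp add: abs_le_iff)
qed

lemma summable_prod_sq:
  fixes c a :: "nat \<Rightarrow> real"
  assumes "\<And>N. (\<Sum>i<N. (c i)^2) \<le> B" "\<And>N. (\<Sum>i<N. (a i)^2) \<le> B"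
  shows "summable (\<lambda>i. c i * a i)"
proof -
  have sc: "summable (\<lambda>i. (c i)^2)" by (rule summableI_nonneg_bounded[OF _ assms(1)]) simp
  have sa: "summable (\<lambda>i. (a i)^2)" by (rule summableI_nonneg_bounded[OF _ assms(2)]) simp
  have "summable (\<lambda>i. ((c i)^2 + (a i)^2) / 2)" using sc sa by (intro summable_divide summable_add)
  then show ?thesis
  proof (rule summable_comparison_test')
    fix i :: nat
    have "0 \<le> (\<bar>c i\<bar> - \<bar>a i\<bar>)^2" by simp
    then show "norm (c i * a i) \<le> ((c i)^2 + (a i)^2) / 2"
      by (simp add: power2_eq_square algebra_simps abs_mult)
  qed
qed

context
  fixes P :: "'s measure" and h :: "'s \<Rightarrow> real" and n :: nat and \<phi> :: "nat \<Rightarrow> 's \<Rightarrow> real"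
  assumes P: "prob_space P" and hm[measurable]: "h \<in> borel_measurable P"
    and E: "\<And>b. integrable P (\<lambda>\<sigma>. exp (b * h \<sigma>))"
    and npos: "n > 0"
    and phim[measurable]: "\<And>i. \<phi> i \<in> borel_measurable P"
    and Bn: "\<And>\<sigma> N. (\<Sum>i<N. (\<phi> i \<sigma>)^2) \<le> real n"
begin

interpretation prob_space P by (rule P)

lemma avg_eq: "gibbs_avg P h b f = (\<integral>\<sigma>. f \<sigma> * (exp (b * h \<sigma>) / partition_fn P h b) \<partial>P)"
  unfolding gibbs_avg_def times_divide_eq_right by simp

lemma avg_diff_bound:
  assumes fm[measurable]: "f \<in> borel_measurable P" and B: "\<And>\<sigma>. \<bar>f \<sigma>\<bar> \<le> B"
  shows "\<bar>gibbs_avg P h b1 f - gibbs_avg P h b0 f\<bar>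
     \<le> B * (\<integral>\<sigma>. \<bar>exp (b1 * h \<sigma>) / partition_fn P h b1 - exp (b0 * h \<sigma>) / partition_fn P h b0\<bar> \<partial>P)"
proof -
  define p1 where "p1 = (\<lambda>\<sigma>. exp (b1 * h \<sigma>) / partition_fn P h b1)"
  define p0 where "p0 = (\<lambda>\<sigma>. exp (b0 * h \<sigma>) / partition_fn P h b0)"
  have i1: "integrable P (\<lambda>\<sigma>. f \<sigma> * p1 \<sigma>)"
    unfolding p1_def times_divide_eq_right using int_weight_bdd[OF hm fm E B] by simp
  have i0: "integrable P (\<lambda>\<sigma>. f \<sigma> * p0 \<sigma>)"
    unfolding p0_def times_divide_eq_right using int_weight_bdd[OF hm fm E B] by simp
  have ip1: "integrable P p1" unfolding p1_def using E by simp
  have ip0: "integrable P p0" unfolding p0_def using E by simp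
  have "gibbs_avg P h b1 f - gibbs_avg P h b0 f = (\<integral>\<sigma>. f \<sigma> * (p1 \<sigma> - p0 \<sigma>) \<partial>P)"
  proof -
    have "gibbs_avg P h b1 f = (\<integral>\<sigma>. f \<sigma> * p1 \<sigma> \<partial>P)" unfolding avg_eq p1_def ..
    moreover have "gibbs_avg P h b0 f = (\<integral>\<sigma>. f \<sigma> * p0 \<sigma> \<partial>P)" unfolding avg_eq p0_def ..
    ultimately show ?thesis using i1 i0 by (simp add: right_diff_distrib)
  qed
  also have "\<bar>\<dots>\<bar> \<le> (\<integral>\<sigma>. \<bar>f \<sigma> * (p1 \<sigma> - p0 \<sigma>)\<bar> \<partial>P)" by (rule integral_abs_bound)
  also have "\<dots> \<le> (\<integral>\<sigma>. B * \<bar>p1 \<sigma> - p0 \<sigma>\<bar> \<partial>P)"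
  proof (rule integral_mono)
    show "integrable P (\<lambda>\<sigma>. \<bar>f \<sigma> * (p1 \<sigma> - p0 \<sigma>)\<bar>)"
      using i1 i0 by (simp add: right_diff_distrib)
    show "integrable P (\<lambda>\<sigma>. B * \<bar>p1 \<sigma> - p0 \<sigma>\<bar>)" using ip1 ip0 by simp
    fix \<sigma> show "\<bar>f \<sigma> * (p1 \<sigma> - p0 \<sigma>)\<bar> \<le> B * \<bar>p1 \<sigma> - p0 \<sigma>\<bar>"
      using B[of \<sigma>] by (simp add: abs_mult mult_right_mono)
  qed
  also have "\<dots> = B * (\<integral>\<sigma>. \<bar>p1 \<sigma> - p0 \<sigma>\<bar> \<partial>P)" by simp
  finally show ?thesis unfolding p1_def p0_def .
qed

lemma phi_sq: "(\<phi> i \<sigma>)^2 \<le> real n"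
proof -
  have "(\<phi> i \<sigma>)^2 \<le> (\<Sum>j<Suc i. (\<phi> j \<sigma>)^2)"
    by (rule member_le_sum) auto
  also have "\<dots> \<le> real n" by (rule Bn)
  finally show ?thesis .
qed

lemma phi_bdd: "\<bar>\<phi> i \<sigma>\<bar> \<le> sqrt (real n)"
proof -
  have "(\<phi> i \<sigma>)^2 \<le> (\<Sum>j<Suc i. (\<phi> j \<sigma>)^2)"
    by (rule member_le_sum) auto
  also have "\<dots> \<le> real n" by (rule Bn)
  finally have "sqrt ((\<phi> i \<sigma>)^2) \<le> sqrt (real n)" by (rule real_sqrt_le_mono)
  then show ?thesis by simp
qed

lemma avg_sum:
  "gibbs_avg P h b (\<lambda>\<sigma>. \<Sum>i<N. c i * \<phi> i \<sigma>) = (\<Sum>i<N. c i * gibbs_avg P h b (\<phi> i))"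
proof -
  have "\<And>i. integrable P (\<lambda>\<sigma>. \<phi> i \<sigma> * exp (b * h \<sigma>))"
    by (rule int_weight_bdd[OF hm phim E phi_bdd])
  then have "(\<integral>\<sigma>. (\<Sum>i<N. c i * (\<phi> i \<sigma> * exp (b * h \<sigma>))) \<partial>P)
      = (\<Sum>i<N. c i * (\<integral>\<sigma>. \<phi> i \<sigma> * exp (b * h \<sigma>) \<partial>P))"
    by (simp add: integral_sum)
  moreover have "(\<lambda>\<sigma>. (\<Sum>i<N. c i * \<phi> i \<sigma>) * exp (b * h \<sigma>)) = (\<lambda>\<sigma>. \<Sum>i<N. c i * (\<phi> i \<sigma> * exp (b * h \<sigma>)))"
    by (simp add: sum_distrib_right mult.assoc)
  ultimately have "(\<integral>\<sigma>. (\<Sum>i<N. c i * \<phi> i \<sigma>) * exp (b * h \<sigma>) \<partial>P)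
      = (\<Sum>i<N. c i * (\<integral>\<sigma>. \<phi> i \<sigma> * exp (b * h \<sigma>) \<partial>P))" by simp
  then show ?thesis unfolding gibbs_avg_def by (simp add: sum_divide_distrib)
qed

lemma avg_sq_partial: "(\<Sum>i<N. (gibbs_avg P h b (\<phi> i))^2) \<le> real n"
proof -
  define Z where "Z = partition_fn P h b"
  have Zp: "Z > 0" unfolding Z_def by (rule Z_pos[OF P hm E])
  define p where "p = (\<lambda>\<sigma>. exp (b * h \<sigma>) / Z)"
  have ip: "integrable P p" unfolding p_def using E by simp
  have sp: "integral\<^sup>L P p = 1" unfolding p_def using Zp by (simp add: Z_def partition_fn_def)
  have pn: "\<And>\<sigma>. 0 \<le> p \<sigma>" unfolding p_def using Zp by simp
  have ifp: "integrable P (\<lambda>\<sigma>. \<phi> i \<sigma> * p \<sigma>)" for i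
    unfolding p_def times_divide_eq_right using int_weight_bdd[OF hm phim E phi_bdd] by simp
  have ifp2: "integrable P (\<lambda>\<sigma>. (\<phi> i \<sigma>)^2 * p \<sigma>)" for i
  proof -
    have "\<bar>(\<phi> i \<sigma>)^2\<bar> \<le> real n" for \<sigma>
      using phi_sq[of i \<sigma>] by simp
    then show ?thesis
      unfolding p_def times_divide_eq_right using int_weight_bdd[OF hm _ E, of "\<lambda>\<sigma>. (\<phi> i \<sigma>)^2" "real n"]
      by simp
  qed
  have av: "gibbs_avg P h b (\<phi> i) = (\<integral>\<sigma>. \<phi> i \<sigma> * p \<sigma> \<partial>P)" for i
    unfolding avg_eq p_def Z_def ..
  have jen: "(gibbs_avg P h b (\<phi> i))^2 \<le> (\<integral>\<sigma>. (\<phi> i \<sigma>)^2 * p \<sigma> \<partial>P)" for i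
  proof -
    define a where "a = gibbs_avg P h b (\<phi> i)"
    have "0 \<le> (\<integral>\<sigma>. (\<phi> i \<sigma> - a)^2 * p \<sigma> \<partial>P)" using pn by simp
    also have "(\<lambda>\<sigma>. (\<phi> i \<sigma> - a)^2 * p \<sigma>) = (\<lambda>\<sigma>. (\<phi> i \<sigma>)^2 * p \<sigma> - 2 * a * (\<phi> i \<sigma> * p \<sigma>) + a^2 * p \<sigma>)"
      by (auto simp: power2_eq_square algebra_simps)
    also have "(\<integral>\<sigma>. (\<phi> i \<sigma>)^2 * p \<sigma> - 2 * a * (\<phi> i \<sigma> * p \<sigma>) + a^2 * p \<sigma> \<partial>P)
        = (\<integral>\<sigma>. (\<phi> i \<sigma>)^2 * p \<sigma> \<partial>P) - 2 * a * (\<integral>\<sigma>. \<phi> i \<sigma> * p \<sigma> \<partial>P) + a^2 * integral\<^sup>L P p"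
      using ifp ifp2 ip by simp
    also have "\<dots> = (\<integral>\<sigma>. (\<phi> i \<sigma>)^2 * p \<sigma> \<partial>P) - a^2"
      using sp av[of i] by (simp add: a_def power2_eq_square)
    finally show ?thesis by (simp add: a_def)
  qed
  have "(\<Sum>i<N. (gibbs_avg P h b (\<phi> i))^2) \<le> (\<Sum>i<N. (\<integral>\<sigma>. (\<phi> i \<sigma>)^2 * p \<sigma> \<partial>P))"
    by (rule sum_mono) (rule jen)
  also have "\<dots> = (\<integral>\<sigma>. (\<Sum>i<N. (\<phi> i \<sigma>)^2) * p \<sigma> \<partial>P)"
    using ifp2 by (simp add: sum_distrib_right)
  also have "\<dots> \<le> (\<integral>\<sigma>. real n * p \<sigma> \<partial>P)"
  proof (rule integral_mono)
    show "integrable P (\<lambda>\<sigma>. (\<Sum>i<N. (\<phi> i \<sigma>)^2) * p \<sigma>)" using ifp2 by (simp add: sum_distrib_right)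
    show "integrable P (\<lambda>\<sigma>. real n * p \<sigma>)" using ip by simp
    fix \<sigma> show "(\<Sum>i<N. (\<phi> i \<sigma>)^2) * p \<sigma> \<le> real n * p \<sigma>"
      using Bn pn by (simp add: mult_right_mono)
  qed
  also have "\<dots> = real n" using sp by simp
  finally show ?thesis .
qed


lemma ser_summable:
  fixes c :: "nat \<Rightarrow> real"
  assumes cB: "\<And>N. (\<Sum>i<N. (c i)^2) \<le> real n"
  shows "summable (\<lambda>i. c i * gibbs_avg P h b (\<phi> i))"
  by (rule summable_prod_sq[OF cB avg_sq_partial])

definition L1d :: "real \<Rightarrow> real \<Rightarrow> real" where
  "L1d b1 b0 = (\<integral>\<sigma>. \<bar>exp (b1 * h \<sigma>) / partition_fn P h b1 - exp (b0 * h \<sigma>) / partition_fn P h b0\<bar> \<partial>P)"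

lemma ser_diff:
  fixes c :: "nat \<Rightarrow> real"
  assumes cB: "\<And>N. (\<Sum>i<N. (c i)^2) \<le> real n"
  shows "\<bar>(\<Sum>i. c i * gibbs_avg P h b1 (\<phi> i)) - (\<Sum>i. c i * gibbs_avg P h b0 (\<phi> i))\<bar> \<le> real n * L1d b1 b0"
proof -
  have "(\<Sum>i. c i * gibbs_avg P h b1 (\<phi> i)) - (\<Sum>i. c i * gibbs_avg P h b0 (\<phi> i))
      = (\<Sum>i. c i * gibbs_avg P h b1 (\<phi> i) - c i * gibbs_avg P h b0 (\<phi> i))"
    by (rule suminf_diff[OF ser_summable[OF cB] ser_summable[OF cB]])
  also have "\<bar>\<dots>\<bar> \<le> real n * L1d b1 b0"
  proof (rule abs_suminf_le)
    show "summable (\<lambda>i. c i * gibbs_avg P h b1 (\<phi> i) - c i * gibbs_avg P h b0 (\<phi> i))"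
      by (intro summable_diff ser_summable[OF cB])
    fix N
    define g where "g = (\<lambda>\<sigma>. \<Sum>i<N. c i * \<phi> i \<sigma>)"
    have gm: "g \<in> borel_measurable P" unfolding g_def by measurable
    have gB: "\<bar>g \<sigma>\<bar> \<le> real n" for \<sigma>
    proof -
      have "(g \<sigma>)^2 \<le> (\<Sum>i<N. (c i)^2) * (\<Sum>i<N. (\<phi> i \<sigma>)^2)"
        unfolding g_def by (rule Cauchy_Schwarz_ineq_sum)
      also have "\<dots> \<le> real n * real n"
        using cB Bn by (intro mult_mono) (auto intro: sum_nonneg)
      finally have "(g \<sigma>)^2 \<le> (real n)^2" by (simp add: power2_eq_square)
      then show ?thesis using abs_le_square_iff[of "g \<sigma>" "real n"] by simp
    qed
    have "(\<Sum>i<N. c i * gibbs_avg P h b1 (\<phi> i) - c i * gibbs_avg P h b0 (\<phi> i))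
        = gibbs_avg P h b1 g - gibbs_avg P h b0 g"
      unfolding g_def avg_sum by (simp add: sum_subtractf)
    also have "\<bar>\<dots>\<bar> \<le> real n * L1d b1 b0"
      unfolding L1d_def by (rule avg_diff_bound[OF gm gB])
    finally show "\<bar>\<Sum>i<N. c i * gibbs_avg P h b1 (\<phi> i) - c i * gibbs_avg P h b0 (\<phi> i)\<bar> \<le> real n * L1d b1 b0" .
  qed
  finally show ?thesis .
qed

lemma deriv_F:
  "deriv (free_energy n P h) b = (\<integral>\<sigma>. h \<sigma> * exp (b * h \<sigma>) \<partial>P) / partition_fn P h b / real n"
proof -
  have d: "(partition_fn P h has_field_derivative (\<integral>\<sigma>. h \<sigma> * exp (b * h \<sigma>) \<partial>P)) (at b)"
    by (rule Z_deriv[OF hm E])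
  have Zp: "partition_fn P h b > 0" by (rule Z_pos[OF P hm E])
  have fe: "free_energy n P h = (\<lambda>b. ln (partition_fn P h b) / real n)"
    by (rule ext) (simp add: free_energy_def)
  have "((\<lambda>b. ln (partition_fn P h b) / real n) has_field_derivative
      (\<integral>\<sigma>. h \<sigma> * exp (b * h \<sigma>) \<partial>P) / partition_fn P h b / real n) (at b)"
    using d Zp npos by (auto intro!: derivative_eq_intros simp: field_simps)
  then show ?thesis unfolding fe by (rule DERIV_imp_deriv)
qed

lemma det_main:
  assumes b01: "b0 \<le> b1"
  shows "(let F = free_energy n P h;
         avg = gibbs_avg P h;
         \<Delta> = sqrt (real n * (b1 - b0) * (deriv F b1 - deriv F b0))
     in (\<forall>f \<in> borel_measurable P. (\<forall>\<sigma>. \<bar>f \<sigma>\<bar> \<le> 1) \<longrightarrow>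
            \<bar>avg b1 f - avg b0 f\<bar> \<le> \<Delta>)
      \<and> (\<forall>\<sigma>. \<bar>(\<Sum>i. \<phi> i \<sigma> * avg b1 (\<phi> i)) - (\<Sum>i. \<phi> i \<sigma> * avg b0 (\<phi> i))\<bar> / real n
              \<le> \<Delta>)
      \<and> \<bar>(\<Sum>i. (avg b1 (\<phi> i))\<^sup>2) - (\<Sum>i. (avg b0 (\<phi> i))\<^sup>2)\<bar> / real n \<le> 2 * \<Delta>)"
proof -
  define \<Delta> where "\<Delta> = sqrt (real n * (b1 - b0) * (deriv (free_energy n P h) b1 - deriv (free_energy n P h) b0))"
  have eqV: "real n * (b1 - b0) * (deriv (free_energy n P h) b1 - deriv (free_energy n P h) b0)
      = (b1 - b0) * ((\<integral>\<sigma>. h \<sigma> * exp (b1 * h \<sigma>) \<partial>P) / partition_fn P h b1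
                         - (\<integral>\<sigma>. h \<sigma> * exp (b0 * h \<sigma>) \<partial>P) / partition_fn P h b0)"
    unfolding deriv_F using npos Z_pos[OF P hm E, of b1] Z_pos[OF P hm E, of b0]
    by (simp add: field_simps)
  have LD: "L1d b1 b0 \<le> \<Delta>" unfolding \<Delta>_def L1d_def eqV by (rule L1_bound[OF P hm E])
  have nn: "real n > 0" using npos by simp
  have a: "\<bar>gibbs_avg P h b1 f - gibbs_avg P h b0 f\<bar> \<le> \<Delta>"
    if "f \<in> borel_measurable P" "\<forall>\<sigma>. \<bar>f \<sigma>\<bar> \<le> 1" for f
    using avg_diff_bound[OF that(1), of 1 b1 b0] that(2) LD unfolding L1d_def by simp
  have b: "\<bar>(\<Sum>i. \<phi> i \<sigma> * gibbs_avg P h b1 (\<phi> i)) - (\<Sum>i. \<phi> i \<sigma> * gibbs_avg P h b0 (\<phi> i))\<bar> / real n \<le> \<Delta>" for \<sigma>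
  proof -
    have "\<bar>(\<Sum>i. \<phi> i \<sigma> * gibbs_avg P h b1 (\<phi> i)) - (\<Sum>i. \<phi> i \<sigma> * gibbs_avg P h b0 (\<phi> i))\<bar> \<le> real n * \<Delta>"
      using ser_diff[of "\<lambda>i. \<phi> i \<sigma>", OF Bn] LD nn by (meson mult_left_mono order_trans less_imp_le)
    then show ?thesis using nn by (simp add: divide_le_eq mult.commute)
  qed
  have c: "\<bar>(\<Sum>i. (gibbs_avg P h b1 (\<phi> i))\<^sup>2) - (\<Sum>i. (gibbs_avg P h b0 (\<phi> i))\<^sup>2)\<bar> / real n \<le> 2 * \<Delta>"
  proof -
    define a1 where "a1 = (\<lambda>i. gibbs_avg P h b1 (\<phi> i))"
    define a0 where "a0 = (\<lambda>i. gibbs_avg P h b0 (\<phi> i))"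
    have B1: "\<And>N. (\<Sum>i<N. (a1 i)^2) \<le> real n" unfolding a1_def by (rule avg_sq_partial)
    have B0: "\<And>N. (\<Sum>i<N. (a0 i)^2) \<le> real n" unfolding a0_def by (rule avg_sq_partial)
    have e1: "\<bar>(\<Sum>i. a1 i * a1 i) - (\<Sum>i. a1 i * a0 i)\<bar> \<le> real n * L1d b1 b0"
      using ser_diff[OF B1] unfolding a1_def a0_def .
    have e0: "\<bar>(\<Sum>i. a0 i * a1 i) - (\<Sum>i. a0 i * a0 i)\<bar> \<le> real n * L1d b1 b0"
      using ser_diff[OF B0] unfolding a1_def a0_def .
    have com: "(\<Sum>i. a0 i * a1 i) = (\<Sum>i. a1 i * a0 i)" by (simp add: mult.commute)
    have "(\<Sum>i. (a1 i)\<^sup>2) - (\<Sum>i. (a0 i)\<^sup>2)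
        = ((\<Sum>i. a1 i * a1 i) - (\<Sum>i. a1 i * a0 i)) + ((\<Sum>i. a0 i * a1 i) - (\<Sum>i. a0 i * a0 i))"
      using com by (simp add: power2_eq_square)
    then have "\<bar>(\<Sum>i. (a1 i)\<^sup>2) - (\<Sum>i. (a0 i)\<^sup>2)\<bar> \<le> 2 * (real n * L1d b1 b0)"
      using e1 e0 by linarith
    also have "\<dots> \<le> 2 * (real n * \<Delta>)" using LD nn by simp
    finally show ?thesis unfolding a1_def a0_def using nn by (simp add: divide_le_eq mult.commute mult.left_commute)
  qed
  show ?thesis unfolding Let_def \<Delta>_def[symmetric] using a b c by blast
qed

end



lemma std_normal_mgf_dens:
  fixes c :: real
  shows "std_normal_density x * exp (c * x) = exp (c^2/2) * normal_density c 1 x"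
proof -
  have "- x\<^sup>2 / 2 + c * x = c^2/2 + (-(x - c)\<^sup>2 / 2)" by (simp add: power2_eq_square field_simps)
  then show ?thesis unfolding normal_density_def by (simp add: exp_add[symmetric])
qed

lemma (in prob_space) normal_mgf:
  assumes D: "distributed M lborel X std_normal_density"
  shows "integrable M (\<lambda>\<omega>. exp (c * X \<omega>))" "(\<integral>\<omega>. exp (c * X \<omega>) \<partial>M) = exp (c^2/2)"
proof -
  have i: "integrable lborel (\<lambda>x. std_normal_density x * exp (c * x))"
    unfolding std_normal_mgf_dens by simp
  then show "integrable M (\<lambda>\<omega>. exp (c * X \<omega>))"
    using distributed_integrable[OF D, of "\<lambda>x. exp (c*x)"] by simp
  have "(\<integral>\<omega>. exp (c * X \<omega>) \<partial>M) = (\<integral>x. std_normal_density x * exp (c * x) \<partial>lborel)"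
    using distributed_integral[OF D, of "\<lambda>x. exp (c*x)"] by simp
  also have "\<dots> = exp (c^2/2)" unfolding std_normal_mgf_dens by simp
  finally show "(\<integral>\<omega>. exp (c * X \<omega>) \<partial>M) = exp (c^2/2)" .
qed

lemma (in prob_space) std_normal_facts:
  assumes D: "distributed M lborel X std_normal_density"
  shows "X \<in> borel_measurable M" "integrable M X" "integrable M (\<lambda>\<omega>. (X \<omega>)^2)"
    "expectation X = 0" "expectation (\<lambda>\<omega>. (X \<omega>)^2) = 1"
proof -
  show "X \<in> borel_measurable M" using distributed_measurable[OF D] by simp
  show "integrable M X"
    using distributed_integrable[OF D, of "\<lambda>x. x"] integrable_std_normal_moment[of 1] by simp
  show "integrable M (\<lambda>\<omega>. (X \<omega>)^2)"
    using distributed_integrable[OF D, of "\<lambda>x. x^2"] integrable_std_normal_moment[of 2] by simp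
  show e: "expectation X = 0" by (rule standard_normal_distributed_expectation[OF D])
  show "expectation (\<lambda>\<omega>. (X \<omega>)^2) = 1"
    using standard_normal_distributed_variance[OF D] e by simp
qed

lemma exp_diff_le: fixes u v :: real assumes "v \<le> u" shows "exp u - exp v \<le> exp u * (u - v)"
proof -
  have "1 + (v - u) \<le> exp (v - u)" by (rule exp_ge_add_one_self)
  then have "exp u * (1 + (v - u)) \<le> exp u * exp (v - u)" by (rule mult_left_mono) simp
  also have "\<dots> = exp v" by (simp add: exp_add[symmetric])
  finally show ?thesis by (simp add: algebra_simps)
qed

lemma min_exp_lip:
  fixes a b C :: real assumes C: "C > 0"
  shows "\<bar>min (exp a) C - min (exp b) C\<bar> \<le> C * \<bar>a - b\<bar>"
proof -
  have me: "min (exp u) C = exp (min u (ln C))" for u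
  proof (cases "u \<le> ln C")
    case True
    then have "exp u \<le> exp (ln C)" by (simp only: exp_le_cancel_iff)
    then have "exp u \<le> C" using C by simp
    then show ?thesis using True by (simp add: min_def)
  next
    case False
    then have "exp (ln C) < exp u" by (simp only: exp_less_cancel_iff not_le)
    then have "C < exp u" using C by simp
    then show ?thesis using False C by (simp add: min_def)
  qed
  have key: "\<bar>exp (min u (ln C)) - exp (min v (ln C))\<bar> \<le> C * \<bar>u - v\<bar>" if "v \<le> u" for u v
  proof -
    have mv: "min v (ln C) \<le> min u (ln C)" using that by simp
    have "exp (min u (ln C)) - exp (min v (ln C)) \<le> exp (min u (ln C)) * (min u (ln C) - min v (ln C))"
      by (rule exp_diff_le[OF mv])
    also have "\<dots> \<le> C * (u - v)"
    proof (rule mult_mono)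
      have "exp (min u (ln C)) \<le> exp (ln C)" by simp
      then show "exp (min u (ln C)) \<le> C" using C by simp
      show "min u (ln C) - min v (ln C) \<le> u - v" using that by (simp add: min_def)
    qed (use C mv in auto)
    finally show ?thesis using mv that by simp
  qed
  show ?thesis unfolding me
  proof (cases "b \<le> a")
    case True then show "\<bar>exp (min a (ln C)) - exp (min b (ln C))\<bar> \<le> C * \<bar>a - b\<bar>" by (rule key)
  next
    case False
    then have "\<bar>exp (min b (ln C)) - exp (min a (ln C))\<bar> \<le> C * \<bar>b - a\<bar>" by (intro key) simp
    then show "\<bar>exp (min a (ln C)) - exp (min b (ln C))\<bar> \<le> C * \<bar>a - b\<bar>" by (simp add: abs_minus_commute)
  qed
qed

lemma abs_le_quad: fixes d t :: real assumes "t > 0" shows "\<bar>d\<bar> \<le> t / 2 + d^2 / (2 * t)"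
proof -
  have "0 \<le> (\<bar>d\<bar> - t)^2" by simp
  then have "2 * t * \<bar>d\<bar> \<le> t^2 + d^2" by (simp add: power2_eq_square algebra_simps)
  then show ?thesis using assms by (simp add: field_simps power2_eq_square)
qed



lemma sq_split:
  fixes s a t :: real assumes t: "t > 0"
  shows "s^2 \<le> (1 + t) * a^2 + (1 + 1/t) * (a - s)^2"
proof -
  have "t * ((1 + t) * a^2 + (1 + 1/t) * (a - s)^2 - s^2) = ((t + 1) * a - s)^2"
    using t by (simp add: field_simps power2_eq_square)
  also have "\<dots> \<ge> 0" by simp
  finally have "0 \<le> t * ((1 + t) * a^2 + (1 + 1/t) * (a - s)^2 - s^2)" .
  then have "0 \<le> (1 + t) * a^2 + (1 + 1/t) * (a - s)^2 - s^2" using t by (simp add: zero_le_mult_iff)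
  then show ?thesis by simp
qed

context
  fixes M :: "'w measure" and g :: "nat \<Rightarrow> 'w \<Rightarrow> real" and hh :: "'w \<Rightarrow> real"
    and x :: "nat \<Rightarrow> real" and n :: nat
  assumes M: "prob_space M"
    and g_indep: "prob_space.indep_vars M (\<lambda>_. borel) g UNIV"
    and g_normal: "\<And>i. distributed M lborel (g i) std_normal_density"
    and hm[measurable]: "hh \<in> borel_measurable M"
    and L2int: "\<And>N. integrable M (\<lambda>\<omega>. (hh \<omega> - (\<Sum>i<N. g i \<omega> * x i))\<^sup>2)"
    and L2lim: "(\<lambda>N. \<integral>\<omega>. (hh \<omega> - (\<Sum>i<N. g i \<omega> * x i))\<^sup>2 \<partial>M) \<longlonglongrightarrow> 0"
    and Eh2: "(\<integral>\<omega>. (hh \<omega>)^2 \<partial>M) = real n"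
begin

interpretation prob_space M by (rule M)

lemma gm[measurable]: "g i \<in> borel_measurable M"
  by (rule std_normal_facts(1)[OF g_normal])

lemma gg: "integrable M (\<lambda>\<omega>. g i \<omega> * g j \<omega>) \<and> (\<integral>\<omega>. g i \<omega> * g j \<omega> \<partial>M) = (if i = j then 1 else 0)"
proof (cases "i = j")
  case True
  then show ?thesis using std_normal_facts(3,5)[OF g_normal, of j] by (simp add: power2_eq_square)
next
  case False
  have ind: "indep_vars (\<lambda>_. borel) g {i,j}" by (rule indep_vars_subset[OF g_indep]) auto
  have ii: "\<And>l. l \<in> {i,j} \<Longrightarrow> integrable M (g l)" using std_normal_facts(2)[OF g_normal] by blast
  have "(\<integral>\<omega>. (\<Prod>l\<in>{i,j}. g l \<omega>) \<partial>M) = (\<Prod>l\<in>{i,j}. \<integral>\<omega>. g l \<omega> \<partial>M)"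
    by (rule indep_vars_lebesgue_integral[OF _ ind ii]) simp
  moreover have "integrable M (\<lambda>\<omega>. (\<Prod>l\<in>{i,j}. g l \<omega>))"
    by (rule indep_vars_integrable[OF _ ind ii]) simp
  ultimately show ?thesis using False std_normal_facts(4)[OF g_normal] by simp
qed

definition S :: "nat \<Rightarrow> 'w \<Rightarrow> real" where "S N \<omega> = (\<Sum>i<N. g i \<omega> * x i)"

lemma Sm[measurable]: "S N \<in> borel_measurable M" unfolding S_def by measurable

lemma ES2: "integrable M (\<lambda>\<omega>. (S N \<omega>)^2) \<and> (\<integral>\<omega>. (S N \<omega>)^2 \<partial>M) = (\<Sum>i<N. (x i)^2)"
proof -
  have eq: "(\<lambda>\<omega>. (S N \<omega>)^2) = (\<lambda>\<omega>. \<Sum>i<N. \<Sum>j<N. (x i * x j) * (g i \<omega> * g j \<omega>))"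
    by (rule ext) (simp add: S_def power2_eq_square sum_product algebra_simps)
  have int: "integrable M (\<lambda>\<omega>. \<Sum>i<N. \<Sum>j<N. (x i * x j) * (g i \<omega> * g j \<omega>))"
    using gg by auto
  have "(\<integral>\<omega>. (\<Sum>i<N. \<Sum>j<N. (x i * x j) * (g i \<omega> * g j \<omega>)) \<partial>M)
      = (\<Sum>i<N. \<Sum>j<N. (x i * x j) * (\<integral>\<omega>. g i \<omega> * g j \<omega> \<partial>M))"
    using gg by (simp add: integral_sum)
  also have "\<dots> = (\<Sum>i<N. \<Sum>j<N. (x i * x j) * (if i = j then 1 else 0))" using gg by simp
  also have "\<dots> = (\<Sum>i<N. \<Sum>j<N. if j = i then x i * x i else 0)"
    by (intro sum.cong refl) auto
  also have "\<dots> = (\<Sum>i<N. (x i)^2)" by (intro sum.cong refl) (simp add: power2_eq_square)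
  finally show ?thesis using eq int by simp
qed

lemma P1: "(\<Sum>i<N. (x i)^2) \<le> real n"
proof -
  define e where "e = (\<lambda>N. \<integral>\<omega>. (hh \<omega> - (\<Sum>i<N. g i \<omega> * x i))\<^sup>2 \<partial>M)"
  have ih: "integrable M (\<lambda>\<omega>. (hh \<omega>)^2)" using L2int[of 0] by simp
  have main: "(\<Sum>i<N. (x i)^2) \<le> (1+t) * real n + (1 + 1/t) * e K" if t: "t > 0" and NK: "N \<le> K" for t K
  proof -
    have "(\<Sum>i<N. (x i)^2) \<le> (\<Sum>i<K. (x i)^2)" using NK by (intro sum_mono2) auto
    also have "\<dots> = (\<integral>\<omega>. (S K \<omega>)^2 \<partial>M)" using ES2 by simp
    also have "\<dots> \<le> (\<integral>\<omega>. (1 + t) * (hh \<omega>)^2 + (1 + 1/t) * (hh \<omega> - S K \<omega>)^2 \<partial>M)"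
    proof (rule integral_mono)
      show "integrable M (\<lambda>\<omega>. (S K \<omega>)^2)" using ES2 by simp
      show "integrable M (\<lambda>\<omega>. (1 + t) * (hh \<omega>)^2 + (1 + 1/t) * (hh \<omega> - S K \<omega>)^2)"
        using ih L2int[of K] unfolding S_def by simp
      fix \<omega> show "(S K \<omega>)^2 \<le> (1 + t) * (hh \<omega>)^2 + (1 + 1/t) * (hh \<omega> - S K \<omega>)^2"
        by (rule sq_split[OF t])
    qed
    also have "\<dots> = (1+t) * real n + (1 + 1/t) * e K"
      using ih L2int[of K] Eh2 unfolding S_def e_def by simp
    finally show ?thesis .
  qed
  have lt: "(\<Sum>i<N. (x i)^2) \<le> (1+t) * real n" if t: "t > 0" for t
  proof (rule LIMSEQ_le_const)
    have "e \<longlonglongrightarrow> 0" unfolding e_def by (rule L2lim)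
    then show "(\<lambda>K. (1+t) * real n + (1 + 1/t) * e K) \<longlonglongrightarrow> (1+t) * real n"
      by (auto intro!: tendsto_eq_intros)
    show "\<exists>K0. \<forall>K\<ge>K0. (\<Sum>i<N. (x i)^2) \<le> (1+t) * real n + (1 + 1/t) * e K"
      using main[OF t] by blast
  qed
  show ?thesis
  proof (rule field_le_epsilon)
    fix \<epsilon> :: real assume \<epsilon>: "\<epsilon> > 0"
    have "(\<Sum>i<N. (x i)^2) \<le> (1 + \<epsilon> / (real n + 1)) * real n" by (rule lt) (use \<epsilon> in simp)
    also have "\<dots> = real n + \<epsilon> * (real n / (real n + 1))" by (simp add: field_simps)
    also have "\<dots> \<le> real n + \<epsilon> * 1" using \<epsilon> by (intro add_left_mono mult_left_mono) auto
    finally show "(\<Sum>i<N. (x i)^2) \<le> real n + \<epsilon>" by simp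
  qed
qed


lemma mgfS: "integrable M (\<lambda>\<omega>. exp (k * S N \<omega>)) \<and> (\<integral>\<omega>. exp (k * S N \<omega>) \<partial>M) = exp (k^2 * (\<Sum>i<N. (x i)^2) / 2)"
proof -
  have eq: "(\<lambda>\<omega>. exp (k * S N \<omega>)) = (\<lambda>\<omega>. \<Prod>i<N. exp ((k * x i) * g i \<omega>))"
    by (rule ext) (simp add: S_def sum_distrib_left exp_sum algebra_simps)
  have ind: "indep_vars (\<lambda>_. borel) (\<lambda>i \<omega>. exp ((k * x i) * g i \<omega>)) {..<N}"
    using indep_vars_compose2[where Y="\<lambda>i y. exp ((k * x i) * y)" and X=g and N="\<lambda>_. borel",
        OF indep_vars_subset[OF g_indep]] by simp
  have ii: "\<And>i. i \<in> {..<N} \<Longrightarrow> integrable M (\<lambda>\<omega>. exp ((k * x i) * g i \<omega>))"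
    using normal_mgf(1)[OF g_normal] by blast
  have "(\<integral>\<omega>. (\<Prod>i<N. exp ((k * x i) * g i \<omega>)) \<partial>M) = (\<Prod>i<N. \<integral>\<omega>. exp ((k * x i) * g i \<omega>) \<partial>M)"
    by (rule indep_vars_lebesgue_integral[OF _ ind ii]) simp
  also have "\<dots> = (\<Prod>i<N. exp ((k * x i)^2 / 2))"
    using normal_mgf(2)[OF g_normal] by simp
  also have "\<dots> = exp (\<Sum>i<N. (k * x i)^2 / 2)" by (simp add: exp_sum)
  also have "(\<Sum>i<N. (k * x i)^2 / 2) = k^2 * (\<Sum>i<N. (x i)^2) / 2"
    by (simp add: power_mult_distrib sum_distrib_left sum_divide_distrib)
  finally have "(\<integral>\<omega>. (\<Prod>i<N. exp ((k * x i) * g i \<omega>)) \<partial>M) = exp (k^2 * (\<Sum>i<N. (x i)^2) / 2)" .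
  moreover have "integrable M (\<lambda>\<omega>. (\<Prod>i<N. exp ((k * x i) * g i \<omega>)))"
    by (rule indep_vars_integrable[OF _ ind ii]) simp
  ultimately show ?thesis unfolding eq by simp
qed

lemma mgfS_le: "(\<integral>\<omega>. exp (k * S N \<omega>) \<partial>M) \<le> exp (k^2 * real n / 2)"
proof -
  have "k^2 * (\<Sum>i<N. (x i)^2) \<le> k^2 * real n" by (rule mult_left_mono[OF P1]) simp
  then show ?thesis using mgfS by simp
qed

lemma trunc:
  assumes C: "C > 0"
  shows "(\<integral>\<omega>. min (exp (k * hh \<omega>)) C \<partial>M) \<le> exp (k^2 * real n / 2)"
proof -
  define e where "e = (\<lambda>N. \<integral>\<omega>. (hh \<omega> - (\<Sum>i<N. g i \<omega> * x i))\<^sup>2 \<partial>M)"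
  define B0 where "B0 = exp (k^2 * real n / 2)"
  have ifm: "integrable M (\<lambda>\<omega>. min (exp (k * hh \<omega>)) C)"
    by (rule integrable_const_bound[where B=C]) (use C in auto)
  have stepN: "(\<integral>\<omega>. min (exp (k * hh \<omega>)) C \<partial>M) \<le> B0 + C * \<bar>k\<bar> * (t/2 + e N / (2*t))"
    if t: "t > 0" for t N
  proof -
    have "(\<integral>\<omega>. min (exp (k * hh \<omega>)) C \<partial>M)
        \<le> (\<integral>\<omega>. exp (k * S N \<omega>) + C * \<bar>k\<bar> * (t/2 + (hh \<omega> - S N \<omega>)^2 / (2*t)) \<partial>M)"
    proof (rule integral_mono[OF ifm])
      show "integrable M (\<lambda>\<omega>. exp (k * S N \<omega>) + C * \<bar>k\<bar> * (t/2 + (hh \<omega> - S N \<omega>)^2 / (2*t)))"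
        using mgfS L2int[of N] unfolding S_def by simp
      fix \<omega>
      have "min (exp (k * hh \<omega>)) C \<le> min (exp (k * S N \<omega>)) C + C * \<bar>k * hh \<omega> - k * S N \<omega>\<bar>"
        using min_exp_lip[OF C, of "k * hh \<omega>" "k * S N \<omega>"] by linarith
      also have "min (exp (k * S N \<omega>)) C \<le> exp (k * S N \<omega>)" by simp
      also have "C * \<bar>k * hh \<omega> - k * S N \<omega>\<bar> = C * \<bar>k\<bar> * \<bar>hh \<omega> - S N \<omega>\<bar>"
        by (simp add: abs_mult right_diff_distrib[symmetric])
      also have "\<dots> \<le> C * \<bar>k\<bar> * (t/2 + (hh \<omega> - S N \<omega>)^2 / (2*t))"
        using abs_le_quad[OF t] C by (intro mult_left_mono) auto
      finally show "min (exp (k * hh \<omega>)) C \<le> exp (k * S N \<omega>) + C * \<bar>k\<bar> * (t/2 + (hh \<omega> - S N \<omega>)^2 / (2*t))"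
        by simp
    qed
    also have "\<dots> = (\<integral>\<omega>. exp (k * S N \<omega>) \<partial>M) + C * \<bar>k\<bar> * (t/2 + e N / (2*t))"
      using mgfS L2int[of N] unfolding S_def e_def by (simp add: prob_space)
    also have "\<dots> \<le> B0 + C * \<bar>k\<bar> * (t/2 + e N / (2*t))"
      using mgfS_le unfolding B0_def by simp
    finally show ?thesis .
  qed
  have stept: "(\<integral>\<omega>. min (exp (k * hh \<omega>)) C \<partial>M) \<le> B0 + C * \<bar>k\<bar> * (t/2)" if t: "t > 0" for t
  proof (rule LIMSEQ_le_const)
    have "e \<longlonglongrightarrow> 0" unfolding e_def by (rule L2lim)
    then show "(\<lambda>N. B0 + C * \<bar>k\<bar> * (t/2 + e N / (2*t))) \<longlonglongrightarrow> B0 + C * \<bar>k\<bar> * (t/2)"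
      using t by (auto intro!: tendsto_eq_intros)
    show "\<exists>N0. \<forall>N\<ge>N0. (\<integral>\<omega>. min (exp (k * hh \<omega>)) C \<partial>M) \<le> B0 + C * \<bar>k\<bar> * (t/2 + e N / (2*t))"
      using stepN[OF t] by blast
  qed
  have "(\<integral>\<omega>. min (exp (k * hh \<omega>)) C \<partial>M) \<le> B0"
  proof (rule field_le_epsilon)
    fix \<epsilon> :: real assume \<epsilon>: "\<epsilon> > 0"
    define t where "t = 2 * \<epsilon> / (C * \<bar>k\<bar> + 1)"
    have t: "t > 0" unfolding t_def using \<epsilon> C by (simp add: add_nonneg_pos)
    have "(\<integral>\<omega>. min (exp (k * hh \<omega>)) C \<partial>M) \<le> B0 + C * \<bar>k\<bar> * (t/2)" by (rule stept[OF t])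
    also have "C * \<bar>k\<bar> * (t/2) = \<epsilon> * (C * \<bar>k\<bar> / (C * \<bar>k\<bar> + 1))"
    proof -
      have "0 \<le> C * \<bar>k\<bar>" using C by simp
      then have dp: "C * \<bar>k\<bar> + 1 \<noteq> 0" by linarith
      show ?thesis unfolding t_def using dp by (simp add: divide_simps)
    qed
    also have "\<dots> \<le> \<epsilon> * 1" using \<epsilon> C by (intro mult_left_mono) (auto simp: add_nonneg_pos)
    finally show "(\<integral>\<omega>. min (exp (k * hh \<omega>)) C \<partial>M) \<le> B0 + \<epsilon>" by simp
  qed
  then show ?thesis unfolding B0_def .
qed

lemma P2: "integrable M (\<lambda>\<omega>. exp (k * hh \<omega>)) \<and> (\<integral>\<omega>. exp (k * hh \<omega>) \<partial>M) \<le> exp (k^2 * real n / 2)"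
proof -
  define f where "f = (\<lambda>m \<omega>. min (exp (k * hh \<omega>)) (real (Suc m)))"
  define B0 where "B0 = exp (k^2 * real n / 2)"
  have fi: "integrable M (f m)" for m
    unfolding f_def by (rule integrable_const_bound[where B="real (Suc m)"]) auto
  have inc: "incseq (\<lambda>m. integral\<^sup>L M (f m))"
    unfolding incseq_def
  proof (intro allI impI)
    fix m m' :: nat assume "m \<le> m'"
    then show "integral\<^sup>L M (f m) \<le> integral\<^sup>L M (f m')"
      by (intro integral_mono fi) (auto simp: f_def)
  qed
  have bd: "\<forall>m. integral\<^sup>L M (f m) \<le> B0"
    unfolding f_def B0_def by (auto intro: trunc)
  obtain L where L: "(\<lambda>m. integral\<^sup>L M (f m)) \<longlonglongrightarrow> L" "\<forall>m. integral\<^sup>L M (f m) \<le> L"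
    using incseq_convergent[OF inc bd] by blast
  have LB: "L \<le> B0" by (rule LIMSEQ_le_const2[OF L(1)]) (use bd in auto)
  have lim: "(\<lambda>m. f m \<omega>) \<longlonglongrightarrow> exp (k * hh \<omega>)" for \<omega>
  proof (rule tendsto_eventually)
    obtain m0 :: nat where "exp (k * hh \<omega>) \<le> real m0" using real_arch_simple by blast
    then show "\<forall>\<^sub>F m in sequentially. f m \<omega> = exp (k * hh \<omega>)"
      unfolding eventually_sequentially f_def by (intro exI[of _ m0]) auto
  qed
  have lim': "(\<lambda>m. min (exp (k * hh \<omega>)) (1 + real m)) \<longlonglongrightarrow> exp (k * hh \<omega>)" for \<omega>
    using lim[of \<omega>] by (simp add: f_def)
  have "integrable M (\<lambda>\<omega>. exp (k * hh \<omega>)) \<and> (\<integral>\<omega>. exp (k * hh \<omega>) \<partial>M) = L"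
  proof (intro conjI)
    show "integrable M (\<lambda>\<omega>. exp (k * hh \<omega>))"
      by (rule integral_monotone_convergence_nonneg(1)[OF fi _ _ _ L(1)])
        (auto simp: f_def mono_def intro: lim')
    show "(\<integral>\<omega>. exp (k * hh \<omega>) \<partial>M) = L"
      by (rule integral_monotone_convergence_nonneg(2)[OF fi _ _ _ L(1)])
        (auto simp: f_def mono_def intro: lim')
  qed
  then show ?thesis using LB unfolding B0_def by simp
qed

end


theorem mainTheorem11:
  fixes M :: "'w measure"
    and P :: "'s::polish_space measure"
    and n :: nat
    and H :: "'w \<Rightarrow> 's \<Rightarrow> real"
    and \<phi> :: "nat \<Rightarrow> 's \<Rightarrow> real"
    and g :: "nat \<Rightarrow> 'w \<Rightarrow> real"
    and \<beta>\<^sub>0 \<beta>\<^sub>1 :: real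
  assumes M_prob: "prob_space M"
    and P_prob: "prob_space P"
    and P_borel: "sets P = sets borel"
    and n_pos: "n > 0"
    and H_meas: "(\<lambda>(\<omega>, \<sigma>). H \<omega> \<sigma>) \<in> borel_measurable (M \<Otimes>\<^sub>M P)"
    and H_centered: "\<And>\<sigma>. prob_space.expectation M (\<lambda>\<omega>. H \<omega> \<sigma>) = 0"
    \<comment> \<open>(A2)\<close>
    and A2: "\<And>\<sigma>. prob_space.variance M (\<lambda>\<omega>. H \<omega> \<sigma>) = real n"
    \<comment> \<open>(A4)\<close>
    and phi_meas: "\<And>i. \<phi> i \<in> borel_measurable P"
    and g_indep: "prob_space.indep_vars M (\<lambda>_. borel) g UNIV"
    and g_normal: "\<And>i. distributed M lborel (g i) std_normal_density"
    and A4_L2_int: "\<And>\<sigma> N. integrable M (\<lambda>\<omega>. (H \<omega> \<sigma> - (\<Sum>i<N. g i \<omega> * \<phi> i \<sigma>))\<^sup>2)"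
    and A4_L2_lim: "\<And>\<sigma>. (\<lambda>N. \<integral>\<omega>. (H \<omega> \<sigma> - (\<Sum>i<N. g i \<omega> * \<phi> i \<sigma>))\<^sup>2 \<partial>M)
                          \<longlonglongrightarrow> 0"
    and beta0: "0 \<le> \<beta>\<^sub>0"
    and beta01: "\<beta>\<^sub>0 \<le> \<beta>\<^sub>1"
  shows "AE \<omega> in M.
    (let F = free_energy n P (H \<omega>);
         avg = gibbs_avg P (H \<omega>);
         \<Delta> = sqrt (real n * (\<beta>\<^sub>1 - \<beta>\<^sub>0) * (deriv F \<beta>\<^sub>1 - deriv F \<beta>\<^sub>0))
     in (\<forall>f \<in> borel_measurable P. (\<forall>\<sigma>. \<bar>f \<sigma>\<bar> \<le> 1) \<longrightarrow>
            \<bar>avg \<beta>\<^sub>1 f - avg \<beta>\<^sub>0 f\<bar> \<le> \<Delta>)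
      \<and> (\<forall>\<sigma>. \<bar>(\<Sum>i. \<phi> i \<sigma> * avg \<beta>\<^sub>1 (\<phi> i)) - (\<Sum>i. \<phi> i \<sigma> * avg \<beta>\<^sub>0 (\<phi> i))\<bar> / real n
              \<le> \<Delta>)
      \<and> \<bar>(\<Sum>i. (avg \<beta>\<^sub>1 (\<phi> i))\<^sup>2) - (\<Sum>i. (avg \<beta>\<^sub>0 (\<phi> i))\<^sup>2)\<bar> / real n \<le> 2 * \<Delta>)"
proof -
  interpret M: prob_space M by (rule M_prob)
  interpret P: prob_space P by (rule P_prob)
  interpret MP: pair_prob_space M P
    by (simp add: pair_prob_space_def pair_sigma_finite_def M_prob P_prob prob_space_imp_sigma_finite)
  note H_meas[measurable]
  have spaceP: "space P = UNIV" using sets_eq_imp_space_eq[OF P_borel] by simp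
  have Hsig[measurable]: "(\<lambda>\<omega>. H \<omega> \<sigma>) \<in> borel_measurable M" for \<sigma>
  proof -
    have "(\<lambda>\<omega>. (\<omega>, \<sigma>)) \<in> measurable M (M \<Otimes>\<^sub>M P)" by (rule measurable_Pair2') (simp add: spaceP)
    from measurable_comp[OF this H_meas] show ?thesis by (simp add: comp_def)
  qed
  have Hom: "H \<omega> \<in> borel_measurable P" if "\<omega> \<in> space M" for \<omega>
  proof -
    have "Pair \<omega> \<in> measurable P (M \<Otimes>\<^sub>M P)" by (rule measurable_Pair1'[OF that])
    from measurable_comp[OF this H_meas] show ?thesis by (simp add: comp_def)
  qed
  have Eh2: "(\<integral>\<omega>. (H \<omega> \<sigma>)^2 \<partial>M) = real n" for \<sigma>
    using A2[of \<sigma>] H_centered[of \<sigma>] by simp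
  have Bn: "(\<Sum>i<N. (\<phi> i \<sigma>)^2) \<le> real n" for \<sigma> N
    by (rule P1[where M=M and g=g and hh="\<lambda>\<omega>. H \<omega> \<sigma>" and x="\<lambda>i. \<phi> i \<sigma>" and n=n, OF M_prob g_indep g_normal Hsig A4_L2_int A4_L2_lim Eh2])
  have mgf: "integrable M (\<lambda>\<omega>. exp (k * H \<omega> \<sigma>)) \<and> (\<integral>\<omega>. exp (k * H \<omega> \<sigma>) \<partial>M) \<le> exp (k^2 * real n / 2)"
    for k \<sigma>
    by (rule P2[where M=M and g=g and hh="\<lambda>\<omega>. H \<omega> \<sigma>" and x="\<lambda>i. \<phi> i \<sigma>" and n=n, OF M_prob g_indep g_normal Hsig A4_L2_int A4_L2_lim Eh2])
  have AEk: "AE \<omega> in M. (\<integral>\<^sup>+\<sigma>. ennreal (exp (k * H \<omega> \<sigma>)) \<partial>P) \<noteq> \<infinity>" for k :: real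
  proof -
    have om: "(\<lambda>y::real. ennreal (exp (k * y))) \<in> borel_measurable borel" by simp
    have fm: "(\<lambda>(\<omega>, \<sigma>). ennreal (exp (k * H \<omega> \<sigma>))) \<in> borel_measurable (M \<Otimes>\<^sub>M P)"
      using measurable_compose[OF H_meas om] by (simp add: case_prod_beta')
    have inner: "(\<integral>\<^sup>+\<omega>. ennreal (exp (k * H \<omega> \<sigma>)) \<partial>M) \<le> ennreal (exp (k^2 * real n / 2))" for \<sigma>
    proof -
      have ii: "integrable M (\<lambda>\<omega>. exp (k * H \<omega> \<sigma>))" using mgf[of k \<sigma>] by blast
      have le: "(\<integral>\<omega>. exp (k * H \<omega> \<sigma>) \<partial>M) \<le> exp (k^2 * real n / 2)" using mgf[of k \<sigma>] by blast
      have "(\<integral>\<^sup>+\<omega>. ennreal (exp (k * H \<omega> \<sigma>)) \<partial>M) = ennreal (\<integral>\<omega>. exp (k * H \<omega> \<sigma>) \<partial>M)"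
        by (rule nn_integral_eq_integral[OF ii]) simp
      also have "\<dots> \<le> ennreal (exp (k^2 * real n / 2))" by (rule ennreal_leI[OF le])
      finally show ?thesis .
    qed
    have "(\<integral>\<^sup>+\<sigma>. (\<integral>\<^sup>+\<omega>. ennreal (exp (k * H \<omega> \<sigma>)) \<partial>M) \<partial>P) \<le> (\<integral>\<^sup>+\<sigma>. ennreal (exp (k^2 * real n / 2)) \<partial>P)"
      by (rule nn_integral_mono) (rule inner)
    also have "\<dots> = ennreal (exp (k^2 * real n / 2))" by (simp add: P.emeasure_space_1)
    also have "(\<integral>\<^sup>+\<sigma>. (\<integral>\<^sup>+\<omega>. ennreal (exp (k * H \<omega> \<sigma>)) \<partial>M) \<partial>P)
        = (\<integral>\<^sup>+\<omega>. (\<integral>\<^sup>+\<sigma>. ennreal (exp (k * H \<omega> \<sigma>)) \<partial>P) \<partial>M)"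
      by (rule MP.Fubini'[OF fm])
    finally have "(\<integral>\<^sup>+\<omega>. (\<integral>\<^sup>+\<sigma>. ennreal (exp (k * H \<omega> \<sigma>)) \<partial>P) \<partial>M) \<le> ennreal (exp (k^2 * real n / 2))" .
    then have "(\<integral>\<^sup>+\<omega>. (\<integral>\<^sup>+\<sigma>. ennreal (exp (k * H \<omega> \<sigma>)) \<partial>P) \<partial>M) < \<top>"
      by (rule le_less_trans[OF _ ennreal_less_top])
    then have fin: "(\<integral>\<^sup>+\<omega>. (\<integral>\<^sup>+\<sigma>. ennreal (exp (k * H \<omega> \<sigma>)) \<partial>P) \<partial>M) \<noteq> \<infinity>"
      by simp
    have bm: "(\<lambda>\<omega>. \<integral>\<^sup>+\<sigma>. ennreal (exp (k * H \<omega> \<sigma>)) \<partial>P) \<in> borel_measurable M"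
      by (rule P.borel_measurable_nn_integral[OF fm])
    show ?thesis by (rule nn_integral_PInf_AE[OF bm fin])
  qed
  have "AE \<omega> in M. \<forall>k::int. (\<integral>\<^sup>+\<sigma>. ennreal (exp (real_of_int k * H \<omega> \<sigma>)) \<partial>P) \<noteq> \<infinity>"
    unfolding AE_all_countable using AEk by blast
  then show ?thesis
  proof (rule AE_mp, intro AE_I2 impI)
    fix \<omega> assume \<omega>: "\<omega> \<in> space M"
      and fin: "\<forall>k::int. (\<integral>\<^sup>+\<sigma>. ennreal (exp (real_of_int k * H \<omega> \<sigma>)) \<partial>P) \<noteq> \<infinity>"
    have hm: "H \<omega> \<in> borel_measurable P" by (rule Hom[OF \<omega>])
    have ints: "integrable P (\<lambda>\<sigma>. exp (real_of_int k * H \<omega> \<sigma>))" for k :: int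
    proof (rule integrableI_nonneg)
      show "(\<lambda>\<sigma>. exp (real_of_int k * H \<omega> \<sigma>)) \<in> borel_measurable P" using hm by measurable
      show "AE \<sigma> in P. 0 \<le> exp (real_of_int k * H \<omega> \<sigma>)" by simp
      show "(\<integral>\<^sup>+\<sigma>. ennreal (exp (real_of_int k * H \<omega> \<sigma>)) \<partial>P) < \<infinity>" using fin by (simp add: less_top)
    qed
    have E: "\<And>b. integrable P (\<lambda>\<sigma>. exp (b * H \<omega> \<sigma>))"
      by (rule exp_int_all[OF hm ints])
    show "let F = free_energy n P (H \<omega>);
         avg = gibbs_avg P (H \<omega>);
         \<Delta> = sqrt (real n * (\<beta>\<^sub>1 - \<beta>\<^sub>0) * (deriv F \<beta>\<^sub>1 - deriv F \<beta>\<^sub>0))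
     in (\<forall>f \<in> borel_measurable P. (\<forall>\<sigma>. \<bar>f \<sigma>\<bar> \<le> 1) \<longrightarrow>
            \<bar>avg \<beta>\<^sub>1 f - avg \<beta>\<^sub>0 f\<bar> \<le> \<Delta>)
      \<and> (\<forall>\<sigma>. \<bar>(\<Sum>i. \<phi> i \<sigma> * avg \<beta>\<^sub>1 (\<phi> i)) - (\<Sum>i. \<phi> i \<sigma> * avg \<beta>\<^sub>0 (\<phi> i))\<bar> / real n
              \<le> \<Delta>)
      \<and> \<bar>(\<Sum>i. (avg \<beta>\<^sub>1 (\<phi> i))\<^sup>2) - (\<Sum>i. (avg \<beta>\<^sub>0 (\<phi> i))\<^sup>2)\<bar> / real n \<le> 2 * \<Delta>"
      by (rule det_main[OF P_prob hm E n_pos phi_meas Bn beta01])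
  qed
qed

end
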